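(* For $\mathfrak{g}$ either atom or loose guards, the triple $(\mathbb{G}_{k}^{\mathfrak{g}}, \varepsilon, (\cdot)^* )$ is a comonad in Kleisli form for all $k>0$, where the counit and coextension are the restrictions of the corresponding operations for the unbounded case.
   Context: For a $\sigma$-structure $\mathcal{A}$, $\mathbb{G}_k^{\mathfrak{g}}\mathcal{A}$ has universe the equivalence classes $[p,a]$ of focussed plays $\langle p,a\rangle$, where $p=[U_1,\ldots,U_n]$ is a non-empty list of $k$-guarded $\mathfrak{g}$-guarded sets of $\mathcal{A}$ (contained in the support of a tuple of length $\le k$ satisfying an atom/loose guard) and $a\in U_n$; $\langle p,a\rangle\sim\langle q,a'\rangle$ iff $a=a'$, $p\sqcap q$ is non-empty, and $a$ lies in the last element of every play on the prefix-order paths from $p\sqcap q$ to $p$ and $q$. Relations: $R^{\mathbb{G}_k\mathcal{A}}=\{([p,a_1],\ldots,[p,a_r])\mid R^{\mathcal{A}}(a_1,\ldots,a_r)\}$. Counit $\varepsilon([p,a])=a$. Coextension of $h:\mathbb{G}_k\mathcal{A}\to\mathcal{B}$: $h^*([[U_1,\ldots,U_n],a])=[[V_1,\ldots,V_n],h([[U_1,\ldots,U_n],a])]$ with $V_j=\{h([[U_1,\ldots,U_j],b])\mid b\in U_j\}$. Comonad in Kleisli form means $\varepsilon^*=\mathsf{id}$, $\varepsilon\circ f^*=f$, $(g\circ f^* )^*=g^*\circ f^*$. *)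

theory Defs
  imports Main "HOL-Library.Sublist"
begin

record ('a, 'r) struct =
  univ :: "'a set"
  rel  :: "'r \<Rightarrow> 'a list set"

definition wf_struct :: "('r \<Rightarrow> nat) \<Rightarrow> ('a, 'r) struct \<Rightarrow> bool" where
  "wf_struct ar A \<longleftrightarrow>
     (\<forall>R t. t \<in> rel A R \<longrightarrow> length t = ar R \<and> set t \<subseteq> univ A)"

definition hom :: "('a, 'r) struct \<Rightarrow> ('b, 'r) struct \<Rightarrow> ('a \<Rightarrow> 'b) \<Rightarrow> bool" where
  "hom A B h \<longleftrightarrow>
     (\<forall>x \<in> univ A. h x \<in> univ B) \<and> (\<forall>R t. t \<in> rel A R \<longrightarrow> map h t \<in> rel B R)"

datatype guard_kind = AtomGuard | LooseGuard

text \<open>A tuple satisfies an atom guard if its support is the support of an atomic fact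
  R(t), or it is a tuple of a single repeated element (equality atom).\<close>
definition atom_guard :: "('a, 'r) struct \<Rightarrow> 'a list \<Rightarrow> bool" where
  "atom_guard A as \<longleftrightarrow> as \<noteq> [] \<and> set as \<subseteq> univ A \<and>
     ((\<exists>a. set as = {a}) \<or> (\<exists>R t. t \<in> rel A R \<and> set t = set as))"

text \<open>A tuple satisfies a loose guard (a conjunction of atoms over its entries) if any
  two distinct entries co-occur in an atomic fact all of whose entries are among the
  entries of the tuple.\<close>
definition loose_guard :: "('a, 'r) struct \<Rightarrow> 'a list \<Rightarrow> bool" where
  "loose_guard A as \<longleftrightarrow> as \<noteq> [] \<and> set as \<subseteq> univ A \<and>
     (\<forall>a \<in> set as. \<forall>b \<in> set as. a \<noteq> b \<longrightarrow>
        (\<exists>R t. t \<in> rel A R \<and> set t \<subseteq> set as \<and> a \<in> set t \<and> b \<in> set t))"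

definition guard_sat :: "guard_kind \<Rightarrow> ('a, 'r) struct \<Rightarrow> 'a list \<Rightarrow> bool" where
  "guard_sat g A as = (case g of AtomGuard \<Rightarrow> atom_guard A as | LooseGuard \<Rightarrow> loose_guard A as)"

definition guarded_set :: "guard_kind \<Rightarrow> nat \<Rightarrow> ('a, 'r) struct \<Rightarrow> 'a set \<Rightarrow> bool" where
  "guarded_set g k A U \<longleftrightarrow> (\<exists>as. length as \<le> k \<and> guard_sat g A as \<and> U \<subseteq> set as)"

definition fplay :: "guard_kind \<Rightarrow> nat \<Rightarrow> ('a, 'r) struct \<Rightarrow> 'a set list \<times> 'a \<Rightarrow> bool" where
  "fplay g k A x \<longleftrightarrow> (case x of (p, a) \<Rightarrow>
     p \<noteq> [] \<and> (\<forall>U \<in> set p. guarded_set g k A U) \<and> a \<in> last p)"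

definition fplays :: "guard_kind \<Rightarrow> nat \<Rightarrow> ('a, 'r) struct \<Rightarrow> ('a set list \<times> 'a) set" where
  "fplays g k A = {x. fplay g k A x}"

definition on_path :: "'a set list \<Rightarrow> 'a set list \<Rightarrow> 'a \<Rightarrow> bool" where
  "on_path r p a \<longleftrightarrow> (\<forall>s. prefix r s \<and> prefix s p \<longrightarrow> a \<in> last s)"

definition play_equiv :: "'a set list \<times> 'a \<Rightarrow> 'a set list \<times> 'a \<Rightarrow> bool" where
  "play_equiv x y \<longleftrightarrow> (case x of (p, a) \<Rightarrow> case y of (q, a') \<Rightarrow>
     a = a' \<and> longest_common_prefix p q \<noteq> [] \<and>
     on_path (longest_common_prefix p q) p a \<and> on_path (longest_common_prefix p q) q a)"

definition play_rel :: "guard_kind \<Rightarrow> nat \<Rightarrow> ('a, 'r) struct \<Rightarrow> ('a set list \<times> 'a) rel" where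
  "play_rel g k A = {(x, y). x \<in> fplays g k A \<and> y \<in> fplays g k A \<and> play_equiv x y}"

definition cls :: "guard_kind \<Rightarrow> nat \<Rightarrow> ('a, 'r) struct \<Rightarrow> 'a set list \<Rightarrow> 'a \<Rightarrow> ('a set list \<times> 'a) set" where
  "cls g k A p a = play_rel g k A `` {(p, a)}"

definition Gk :: "guard_kind \<Rightarrow> nat \<Rightarrow> ('a, 'r) struct \<Rightarrow> (('a set list \<times> 'a) set, 'r) struct" where
  "Gk g k A =
     \<lparr> univ = fplays g k A // play_rel g k A,
       rel = (\<lambda>R. {map (\<lambda>a. cls g k A p a) as | p as.
                     as \<in> rel A R \<and> (\<forall>a \<in> set as. fplay g k A (p, a))}) \<rparr>"

definition counit :: "('a set list \<times> 'a) set \<Rightarrow> 'a" where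
  "counit X = snd (SOME x. x \<in> X)"

text \<open>Coextension of h : G_k A \<rightarrow> B:
  h*([[U_1..U_n],a]) = [[V_1..V_n], h([[U_1..U_n],a])],
  V_j = { h([[U_1..U_j],b]) | b \<in> U_j }  (via a representative).\<close>
definition coext :: "guard_kind \<Rightarrow> nat \<Rightarrow> ('a, 'r) struct \<Rightarrow> ('b, 'r) struct
    \<Rightarrow> (('a set list \<times> 'a) set \<Rightarrow> 'b) \<Rightarrow> ('a set list \<times> 'a) set \<Rightarrow> ('b set list \<times> 'b) set" where
  "coext g k A B h X =
     (let p = fst (SOME x. x \<in> X)
      in cls g k B
           (map (\<lambda>j. (\<lambda>b. h (cls g k A (take j p) b)) ` (p ! (j - 1))) [1..<Suc (length p)])
           (h X))"

end

theory Submission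
  imports Defs
begin

lemma prefix_take_len: "prefix u p \<Longrightarrow> u = take (length u) p"
  by (auto simp: prefix_def)

lemma on_path_mono: "on_path u p a \<Longrightarrow> prefix u v \<Longrightarrow> on_path v p a"
  unfolding on_path_def using prefix_order.order_trans by blast

lemma play_equiv_iff:
  "play_equiv (p,a) (q,b) \<longleftrightarrow> a = b \<and> (\<exists>u. u \<noteq> [] \<and> prefix u p \<and> prefix u q \<and> on_path u p a \<and> on_path u q a)"
proof
  assume h: "play_equiv (p,a) (q,b)"
    have ab: "a = b" using h by (simp add: play_equiv_def)
    have h2: "play_equiv (p,a) (q,a)" using h ab by simp
    have h': "a = b \<and> longest_common_prefix p q \<noteq> [] \<and>
      on_path (longest_common_prefix p q) p a \<and> on_path (longest_common_prefix p q) q a"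
      using h2 ab unfolding play_equiv_def by simp
    then show "a = b \<and> (\<exists>u. u \<noteq> [] \<and> prefix u p \<and> prefix u q \<and> on_path u p a \<and> on_path u q a)"
      using longest_common_prefix_prefix1[of p q] longest_common_prefix_prefix2[of p q] by blast
next
  assume "a = b \<and> (\<exists>u. u \<noteq> [] \<and> prefix u p \<and> prefix u q \<and> on_path u p a \<and> on_path u q a)"
  then obtain u where ab: "a = b" and u: "u \<noteq> []" "prefix u p" "prefix u q" "on_path u p a" "on_path u q a"
    by blast
  have l: "prefix u (longest_common_prefix p q)"
    using u longest_common_prefix_max_prefix by blast
  then have "longest_common_prefix p q \<noteq> []" using u(1) by auto
  then show "play_equiv (p,a) (q,b)"
    unfolding play_equiv_def using ab l u on_path_mono by auto
qed

lemma play_equiv_refl: "a \<in> last p \<Longrightarrow> p \<noteq> [] \<Longrightarrow> play_equiv (p,a) (p,a)"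
proof -
  assume a: "a \<in> last p" "p \<noteq> []"
  have "on_path p p a" unfolding on_path_def using a prefix_order.antisym by blast
  then show ?thesis unfolding play_equiv_iff using a by blast
qed

lemma play_equiv_sym': "play_equiv (p,a) (q,b) \<Longrightarrow> play_equiv (q,b) (p,a)"
proof -
  assume "play_equiv (p,a) (q,b)"
  then obtain u where ab: "a = b" and u: "u \<noteq> []" "prefix u p" "prefix u q" "on_path u p a" "on_path u q a"
    unfolding play_equiv_iff by blast
  show ?thesis unfolding play_equiv_iff
    by (intro conjI exI[of _ u]) (simp_all add: ab[symmetric] u)
qed

lemma play_equiv_sym: "play_equiv x y \<Longrightarrow> play_equiv y x"
  using play_equiv_sym'[of "fst x" "snd x" "fst y" "snd y"] by simp

lemma play_equiv_trans: "play_equiv (p,a) (q,b) \<Longrightarrow> play_equiv (q,b) (r,c) \<Longrightarrow> play_equiv (p,a) (r,c)"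
proof -
  assume h1: "play_equiv (p,a) (q,b)" and h2: "play_equiv (q,b) (r,c)"
  from h1 obtain u1 where ab: "a = b" and u1: "u1 \<noteq> []" "prefix u1 p" "prefix u1 q" "on_path u1 p a" "on_path u1 q a"
    unfolding play_equiv_iff by blast
  from h2 obtain u2 where bc: "b = c" and u2: "u2 \<noteq> []" "prefix u2 q" "prefix u2 r" "on_path u2 q b" "on_path u2 r b"
    unfolding play_equiv_iff by blast
  have "prefix u1 u2 \<or> prefix u2 u1" using u1(3) u2(2) prefix_same_cases by blast
  then show ?thesis
  proof
    assume "prefix u1 u2"
    have "on_path u1 r a" unfolding on_path_def
    proof (intro allI impI)
      fix s assume s: "prefix u1 s \<and> prefix s r"
      have "prefix s u2 \<or> prefix u2 s" using s u2(3) prefix_same_cases by blast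
      then show "a \<in> last s"
      proof
        assume "prefix s u2"
        then have "prefix s q" using u2(2) prefix_order.order_trans by blast
        then show ?thesis using u1(5) s unfolding on_path_def by blast
      next
        assume "prefix u2 s"
        then show ?thesis using u2(5) s ab unfolding on_path_def by blast
      qed
    qed
    then show ?thesis unfolding play_equiv_iff using ab bc u1 u2 \<open>prefix u1 u2\<close>
      prefix_order.order_trans by blast
  next
    assume "prefix u2 u1"
    have "on_path u2 p a" unfolding on_path_def
    proof (intro allI impI)
      fix s assume s: "prefix u2 s \<and> prefix s p"
      have "prefix s u1 \<or> prefix u1 s" using s u1(2) prefix_same_cases by blast
      then show "a \<in> last s"
      proof
        assume "prefix s u1"
        then have "prefix s q" using u1(3) prefix_order.order_trans by blast
        then show ?thesis using u2(4) s ab unfolding on_path_def by blast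
      next
        assume "prefix u1 s"
        then show ?thesis using u1(4) s ab unfolding on_path_def by blast
      qed
    qed
    then show ?thesis unfolding play_equiv_iff using ab bc u1 u2 \<open>prefix u2 u1\<close>
      prefix_order.order_trans by blast
  qed
qed

lemma equiv_play_rel: "equiv (fplays g k A) (play_rel g k A)"
proof (rule equivI)
  show "play_rel g k A \<subseteq> fplays g k A \<times> fplays g k A"
    unfolding play_rel_def by blast
  show "refl_on (fplays g k A) (play_rel g k A)"
    unfolding refl_on_def play_rel_def
  proof (intro ballI)
    fix x assume "x \<in> fplays g k A"
    then show "(x, x) \<in> {(x, y). x \<in> fplays g k A \<and> y \<in> fplays g k A \<and> play_equiv x y}"
      by (cases x) (simp add: fplays_def fplay_def play_equiv_refl)
  qed
  show "sym (play_rel g k A)"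
    unfolding sym_def play_rel_def by (auto intro: play_equiv_sym)
  show "trans (play_rel g k A)"
    unfolding trans_def play_rel_def by (auto intro: play_equiv_trans)
qed

lemma cls_eq:
  "(p,a) \<in> fplays g k A \<Longrightarrow> (q,b) \<in> fplays g k A \<Longrightarrow> play_equiv (p,a) (q,b) \<Longrightarrow>
   cls g k A p a = cls g k A q b"
  unfolding cls_def
  by (rule equiv_class_eq[OF equiv_play_rel]) (simp add: play_rel_def)

lemma cls_in_univ: "(p,a) \<in> fplays g k A \<Longrightarrow> cls g k A p a \<in> univ (Gk g k A)"
  unfolding cls_def Gk_def by (simp add: quotientI)

lemma univ_GkE:
  assumes "X \<in> univ (Gk g k A)"
  obtains p a where "(p,a) \<in> fplays g k A" "X = cls g k A p a"
proof -
  have "X \<in> fplays g k A // play_rel g k A" using assms unfolding Gk_def by simp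
  then obtain x where x: "x \<in> fplays g k A" "X = play_rel g k A `` {x}" by (rule quotientE)
  show ?thesis
    using that[of "fst x" "snd x"] x unfolding cls_def by simp
qed

lemma some_cls:
  assumes "(p,a) \<in> fplays g k A"
  obtains q where "(SOME x. x \<in> cls g k A p a) = (q,a)" "(q,a) \<in> fplays g k A"
    "cls g k A q a = cls g k A p a" "play_equiv (p,a) (q,a)"
proof -
  have "(p,a) \<in> cls g k A p a"
    using assms equiv_class_self[OF equiv_play_rel] unfolding cls_def by blast
  then have "(SOME x. x \<in> cls g k A p a) \<in> cls g k A p a" by (rule someI)
  then obtain q b where qb: "(SOME x. x \<in> cls g k A p a) = (q,b)" "((p,a),(q,b)) \<in> play_rel g k A"
    unfolding cls_def by (metis Image_singleton_iff surj_pair)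
  then have "b = a" "(q,b) \<in> fplays g k A" "play_equiv (p,a) (q,b)"
    unfolding play_rel_def play_equiv_def by auto
  moreover have "cls g k A q b = cls g k A p a"
    using cls_eq assms calculation play_equiv_sym by metis
  ultimately show ?thesis using that qb by blast
qed

lemma counit_cls: "(p,a) \<in> fplays g k A \<Longrightarrow> counit (cls g k A p a) = a"
proof -
  assume h: "(p,a) \<in> fplays g k A"
  obtain q where "(SOME x. x \<in> cls g k A p a) = (q,a)" using some_cls[OF h] by blast
  then show ?thesis unfolding counit_def by simp
qed

lemma guard_univ: "guard_sat g A as \<Longrightarrow> set as \<subseteq> univ A"
  unfolding guard_sat_def atom_guard_def loose_guard_def by (cases g) auto

lemma fplays_univ: "(p,a) \<in> fplays g k A \<Longrightarrow> a \<in> univ A"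
proof -
  assume "(p,a) \<in> fplays g k A"
  then have p: "p \<noteq> []" "\<forall>U\<in>set p. guarded_set g k A U" "a \<in> last p"
    unfolding fplays_def fplay_def by auto
  then have "guarded_set g k A (last p)" by simp
  then obtain as where "guard_sat g A as" "last p \<subseteq> set as" unfolding guarded_set_def by blast
  then show ?thesis using p(3) guard_univ by blast
qed


definition Vl :: "guard_kind \<Rightarrow> nat \<Rightarrow> ('a, 'r) struct \<Rightarrow> (('a set list \<times> 'a) set \<Rightarrow> 'b)
    \<Rightarrow> 'a set list \<Rightarrow> 'b set list" where
  "Vl g k A h p = map (\<lambda>j. (\<lambda>b. h (cls g k A (take j p) b)) ` (p ! (j - 1))) [1..<Suc (length p)]"

lemma coext_alt: "coext g k A B h X = cls g k B (Vl g k A h (fst (SOME x. x \<in> X))) (h X)"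
  by (simp add: coext_def Vl_def Let_def)

lemma length_Vl[simp]: "length (Vl g k A h p) = length p"
  by (simp add: Vl_def del: upt_Suc)

lemma nth_Vl: "i < length p \<Longrightarrow> Vl g k A h p ! i = (\<lambda>b. h (cls g k A (take (Suc i) p) b)) ` (p ! i)"
  by (simp add: Vl_def del: upt_Suc)

lemma take_Vl: "take n (Vl g k A h p) = Vl g k A h (take n p)"
proof (rule nth_equalityI)
  show "length (take n (Vl g k A h p)) = length (Vl g k A h (take n p))" by simp
  fix i assume "i < length (take n (Vl g k A h p))"
  then have i: "i < n" "i < length p" by auto
  have "take (Suc i) (take n p) = take (Suc i) p" using i by (simp add: min_def)
  then show "take n (Vl g k A h p) ! i = Vl g k A h (take n p) ! i"
    using i by (simp add: nth_Vl)
qed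

lemma Vl_Nil_iff[simp]: "Vl g k A h p = [] \<longleftrightarrow> p = []"
  by (metis length_0_conv length_Vl)

lemma last_Vl: "p \<noteq> [] \<Longrightarrow> last (Vl g k A h p) = (\<lambda>b. h (cls g k A p b)) ` (last p)"
  by (simp add: last_conv_nth nth_Vl)

lemma prefix_Vl: "prefix u p \<Longrightarrow> prefix (Vl g k A h u) (Vl g k A h p)"
  by (metis prefix_take_len take_Vl take_is_prefix)

lemma prefix_VlE:
  assumes "prefix s (Vl g k A h p)"
  obtains v where "prefix v p" "s = Vl g k A h v"
  using assms that by (metis prefix_take_len take_Vl take_is_prefix)

lemma fplays_prefix:
  "(p,a) \<in> fplays g k A \<Longrightarrow> prefix v p \<Longrightarrow> v \<noteq> [] \<Longrightarrow> b \<in> last v \<Longrightarrow> (v,b) \<in> fplays g k A"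
  unfolding fplays_def fplay_def using set_mono_prefix by fastforce

lemma equiv_mid:
  assumes "u \<noteq> []" "prefix u v" "prefix v p" "on_path u p a"
  shows "play_equiv (v,a) (p,a)"
proof -
  have o1: "on_path v p a" using on_path_mono[OF assms(4) assms(2)] .
  have av: "a \<in> last v" using assms(2,3,4) unfolding on_path_def by blast
  have o2: "on_path v v a" unfolding on_path_def
  proof (intro allI impI)
    fix s assume "prefix v s \<and> prefix s v"
    then have "s = v" using prefix_order.antisym by blast
    then show "a \<in> last s" using av by simp
  qed
  have "v \<noteq> []" using assms(1,2) by auto
  then show ?thesis unfolding play_equiv_iff
    by (intro conjI exI[of _ v]) (simp_all add: o1 o2 assms(3))
qed


lemma rel_GkI:
  "t \<in> rel A R \<Longrightarrow> (\<forall>a \<in> set t. fplay g k A (p, a)) \<Longrightarrow> map (cls g k A p) t \<in> rel (Gk g k A) R"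
  unfolding Gk_def by auto

lemma rel_GkE:
  assumes "t \<in> rel (Gk g k A) R"
  obtains p as where "as \<in> rel A R" "\<forall>a \<in> set as. (p, a) \<in> fplays g k A" "t = map (cls g k A p) as"
  using assms unfolding Gk_def fplays_def by auto

lemma guard_image:
  assumes hom: "hom (Gk g k A) B f" and v: "v \<noteq> []" "\<forall>U\<in>set v. guarded_set g k A U"
  shows "guarded_set g k B ((\<lambda>b. f (cls g k A v b)) ` last v)"
proof -
  have "guarded_set g k A (last v)" using v by simp
  then obtain as where as: "length as \<le> k" "guard_sat g A as" "last v \<subseteq> set as"
    unfolding guarded_set_def by blast
  define v' where "v' = v @ [set as]"
  have gas: "guarded_set g k A (set as)" unfolding guarded_set_def using as by blast
  have fp': "(v', b) \<in> fplays g k A" if "b \<in> set as" for b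
  proof -
    have "\<forall>U\<in>set v'. guarded_set g k A U" using v(2) gas unfolding v'_def by simp
    moreover have "v' \<noteq> []" "last v' = set as" unfolding v'_def by simp_all
    ultimately show ?thesis using that unfolding fplays_def fplay_def by simp
  qed
  have eqc: "cls g k A v b = cls g k A v' b" if b: "b \<in> last v" for b
  proof -
    have fp: "(v, b) \<in> fplays g k A" using v b unfolding fplays_def fplay_def by simp
    have o1: "on_path v v b" unfolding on_path_def
    proof (intro allI impI)
      fix s assume "prefix v s \<and> prefix s v"
      then have "s = v" using prefix_order.antisym by blast
      then show "b \<in> last s" using b by simp
    qed
    have o2: "on_path v v' b" unfolding on_path_def v'_def
    proof (intro allI impI)
      fix s assume s: "prefix v s \<and> prefix s (v @ [set as])"
      have "s = v @ [set as] \<or> prefix s v" using s by simp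
      then show "b \<in> last s"
      proof
        assume "s = v @ [set as]" then show ?thesis using b as(3) by auto
      next
        assume "prefix s v"
        then have "s = v" using s prefix_order.antisym by blast
        then show ?thesis using b by simp
      qed
    qed
    have "prefix v v'" unfolding v'_def by simp
    then have "play_equiv (v,b) (v',b)" unfolding play_equiv_iff
      by (intro conjI exI[of _ v]) (simp_all add: o1 o2 v(1))
    moreover have "(v', b) \<in> fplays g k A" using fp' as(3) b by blast
    ultimately show ?thesis using cls_eq[OF fp] by blast
  qed
  define F where "F b = f (cls g k A v' b)" for b
  have img: "(\<lambda>b. f (cls g k A v b)) ` last v \<subseteq> F ` set as"
  proof
    fix x assume "x \<in> (\<lambda>b. f (cls g k A v b)) ` last v"
    then obtain b where b: "b \<in> last v" "x = f (cls g k A v b)" by blast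
    then have "x = F b" using eqc unfolding F_def by simp
    then show "x \<in> F ` set as" using b(1) as(3) by blast
  qed
  have Funiv: "F b \<in> univ B" if "b \<in> set as" for b
  proof -
    have "cls g k A v' b \<in> univ (Gk g k A)" using fp'[OF that] by (rule cls_in_univ)
    then show ?thesis using hom unfolding hom_def F_def by blast
  qed
  have Frel: "map F t \<in> rel B R" if "t \<in> rel A R" "set t \<subseteq> set as" for t R
  proof -
    have "\<forall>a\<in>set t. fplay g k A (v', a)" using fp' that(2) unfolding fplays_def by blast
    then have "map (cls g k A v') t \<in> rel (Gk g k A) R" by (rule rel_GkI[OF that(1)])
    then have "map f (map (cls g k A v') t) \<in> rel B R" using hom unfolding hom_def by blast
    then show ?thesis unfolding F_def by (simp add: o_def)
  qed
  define bs where "bs = remdups (map F as)"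
  have lbs: "length bs \<le> k" unfolding bs_def using as(1) length_remdups_leq[of "map F as"]
    by simp
  have sbs: "set bs = F ` set as" unfolding bs_def by simp
  have ne: "as \<noteq> []" using as(2) unfolding guard_sat_def atom_guard_def loose_guard_def
    by (cases g) (simp_all only: guard_kind.case, simp_all)
  then have bsne: "bs \<noteq> []" unfolding bs_def by simp
  have bsu: "set bs \<subseteq> univ B" using Funiv by (simp add: sbs image_subset_iff)
  have "guard_sat g B bs"
  proof (cases g)
    case AtomGuard
    then have ag: "(\<exists>a. set as = {a}) \<or> (\<exists>R t. t \<in> rel A R \<and> set t = set as)"
      using as(2) unfolding guard_sat_def atom_guard_def by simp
    have "(\<exists>a. set bs = {a}) \<or> (\<exists>R t. t \<in> rel B R \<and> set t = set bs)"
      using ag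
    proof
      assume "\<exists>a. set as = {a}"
      then obtain a where "set as = {a}" by blast
      then have "set bs = {F a}" using sbs by simp
      then show ?thesis by blast
    next
      assume "\<exists>R t. t \<in> rel A R \<and> set t = set as"
      then obtain R t where "t \<in> rel A R" "set t = set as" by blast
      then have "map F t \<in> rel B R" "set (map F t) = set bs" using Frel sbs by simp_all
      then show ?thesis by blast
    qed
    then show ?thesis using AtomGuard bsne bsu unfolding guard_sat_def atom_guard_def by simp
  next
    case LooseGuard
    then have lg: "\<forall>a \<in> set as. \<forall>b \<in> set as. a \<noteq> b \<longrightarrow>
        (\<exists>R t. t \<in> rel A R \<and> set t \<subseteq> set as \<and> a \<in> set t \<and> b \<in> set t)"
      using as(2) unfolding guard_sat_def loose_guard_def by simp
    have "\<forall>x \<in> set bs. \<forall>y \<in> set bs. x \<noteq> y \<longrightarrow>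
        (\<exists>R t. t \<in> rel B R \<and> set t \<subseteq> set bs \<and> x \<in> set t \<and> y \<in> set t)"
    proof (intro ballI impI)
      fix x y assume x: "x \<in> set bs" and y: "y \<in> set bs" and xy: "x \<noteq> y"
      obtain a where a: "a \<in> set as" "x = F a" using x sbs by blast
      obtain b where b: "b \<in> set as" "y = F b" using y sbs by blast
      note ab = a(1) b(1) a(2) b(2)
      have "a \<noteq> b" using xy ab by blast
      then obtain R t where t: "t \<in> rel A R" "set t \<subseteq> set as" "a \<in> set t" "b \<in> set t"
        using lg ab by blast
      then have "map F t \<in> rel B R" "set (map F t) \<subseteq> set bs" "x \<in> set (map F t)" "y \<in> set (map F t)"
        using Frel sbs ab by auto
      then show "\<exists>R t. t \<in> rel B R \<and> set t \<subseteq> set bs \<and> x \<in> set t \<and> y \<in> set t" by blast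
    qed
    then show ?thesis using LooseGuard bsne bsu unfolding guard_sat_def loose_guard_def by simp
  qed
  then show ?thesis unfolding guarded_set_def using lbs img sbs by blast
qed

lemma Vl_fplay:
  assumes hom: "hom (Gk g k A) B f" and pa: "(p,a) \<in> fplays g k A"
  shows "(Vl g k A f p, f (cls g k A p a)) \<in> fplays g k B"
proof -
  have p: "p \<noteq> []" "\<forall>U\<in>set p. guarded_set g k A U" "a \<in> last p"
    using pa unfolding fplays_def fplay_def by simp_all
  have "guarded_set g k B V" if V: "V \<in> set (Vl g k A f p)" for V
  proof -
    obtain i where i0: "i < length (Vl g k A f p)" "V = Vl g k A f p ! i"
      using V unfolding in_set_conv_nth by blast
    then have i: "i < length p" "V = Vl g k A f p ! i" by simp_all
    let ?v = "take (Suc i) p"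
    have v1: "?v \<noteq> []" using i(1) by (cases p) simp_all
    have v2: "\<forall>U\<in>set ?v. guarded_set g k A U" using p(2) in_set_takeD by metis
    have v3: "last ?v = p ! i" using i by (simp add: take_Suc_conv_app_nth)
    note v = v1 v2 v3
    have "V = (\<lambda>b. f (cls g k A ?v b)) ` last ?v" using i v(3) by (simp add: nth_Vl)
    then show ?thesis using guard_image[OF hom v(1,2)] by simp
  qed
  moreover have "f (cls g k A p a) \<in> last (Vl g k A f p)" using p by (simp add: last_Vl)
  ultimately show ?thesis using p unfolding fplays_def fplay_def by simp
qed

lemma on_path_Vl:
  assumes pa: "(p,a) \<in> fplays g k A" and u: "u \<noteq> []" "prefix u p" "on_path u p a"
  shows "on_path (Vl g k A f u) (Vl g k A f p) (f (cls g k A p a))"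
  unfolding on_path_def
proof (intro allI impI)
  fix s assume s: "prefix (Vl g k A f u) s \<and> prefix s (Vl g k A f p)"
  from conjunct2[OF s] obtain v where v: "prefix v p" "s = Vl g k A f v" by (rule prefix_VlE)
  have "length (Vl g k A f u) \<le> length s" using conjunct1[OF s] by (rule prefix_length_le)
  then have "length u \<le> length v" using v(2) by simp
  then have uv: "prefix u v" by (rule prefix_length_prefix[OF u(2) v(1)])
  have vne: "v \<noteq> []" using uv u(1) by (cases v) simp_all
  have av: "a \<in> last v" using u(3) uv v(1) unfolding on_path_def by blast
  have fpv: "(v,a) \<in> fplays g k A" by (rule fplays_prefix[OF pa v(1) vne av])
  have c: "cls g k A v a = cls g k A p a"
    by (rule cls_eq[OF fpv pa equiv_mid[OF u(1) uv v(1) u(3)]])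
  have l: "last s = (\<lambda>b. f (cls g k A v b)) ` last v" using v(2) vne by (simp add: last_Vl)
  have "f (cls g k A v a) \<in> (\<lambda>b. f (cls g k A v b)) ` last v" using av by (rule imageI)
  then show "f (cls g k A p a) \<in> last s" unfolding l c .
qed

lemma Vl_wd:
  assumes hom: "hom (Gk g k A) B f" and pa: "(p,a) \<in> fplays g k A" and qa: "(q,a) \<in> fplays g k A"
    and e: "play_equiv (p,a) (q,a)"
  shows "play_equiv (Vl g k A f p, f (cls g k A p a)) (Vl g k A f q, f (cls g k A q a))"
proof -
  have c: "cls g k A q a = cls g k A p a" using cls_eq[OF pa qa e] by simp
  obtain u where u: "u \<noteq> []" "prefix u p" "prefix u q" "on_path u p a" "on_path u q a"
    using e unfolding play_equiv_iff by blast
  have "on_path (Vl g k A f u) (Vl g k A f p) (f (cls g k A p a))"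
    using on_path_Vl[OF pa u(1,2,4)] .
  moreover have "on_path (Vl g k A f u) (Vl g k A f q) (f (cls g k A p a))"
    using on_path_Vl[OF qa u(1,3,5)] c by simp
  ultimately show ?thesis unfolding play_equiv_iff c using u prefix_Vl
    by (metis Vl_Nil_iff)
qed

lemma coext_eq:
  assumes hom: "hom (Gk g k A) B f" and pa: "(p,a) \<in> fplays g k A"
  shows "coext g k A B f (cls g k A p a) = cls g k B (Vl g k A f p) (f (cls g k A p a))"
proof -
  obtain q where q: "(SOME x. x \<in> cls g k A p a) = (q,a)" "(q,a) \<in> fplays g k A"
    "cls g k A q a = cls g k A p a" "play_equiv (p,a) (q,a)"
    using some_cls[OF pa] by blast
  have "coext g k A B f (cls g k A p a) = cls g k B (Vl g k A f q) (f (cls g k A p a))"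
    by (simp add: coext_alt q(1))
  also have "\<dots> = cls g k B (Vl g k A f p) (f (cls g k A p a))"
  proof -
    have "play_equiv (Vl g k A f q, f (cls g k A q a)) (Vl g k A f p, f (cls g k A p a))"
      using Vl_wd[OF hom q(2) pa] q(4) play_equiv_sym by blast
    then show ?thesis using cls_eq Vl_fplay[OF hom q(2)] Vl_fplay[OF hom pa] q(3) by metis
  qed
  finally show ?thesis .
qed

lemma hom_comp: "hom A B f \<Longrightarrow> hom B C h \<Longrightarrow> hom A C (h \<circ> f)"
proof -
  assume f: "hom A B f" and h: "hom B C h"
  show ?thesis unfolding hom_def
  proof (intro conjI allI impI ballI)
    fix x assume "x \<in> univ A"
    then show "(h \<circ> f) x \<in> univ C" using f h unfolding hom_def by simp
  next
    fix R t assume "t \<in> rel A R"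
    then have "map f t \<in> rel B R" using f unfolding hom_def by blast
    then have "map h (map f t) \<in> rel C R" using h unfolding hom_def by blast
    then show "map (h \<circ> f) t \<in> rel C R" by simp
  qed
qed

lemma hom_counit: "hom (Gk g k A) A counit"
  unfolding hom_def
proof (intro conjI allI impI ballI)
  fix X assume "X \<in> univ (Gk g k A)"
  then obtain p a where "(p,a) \<in> fplays g k A" "X = cls g k A p a" by (rule univ_GkE)
  then show "counit X \<in> univ A" using counit_cls fplays_univ by metis
next
  fix R t assume "t \<in> rel (Gk g k A) R"
  then obtain p as where pa: "as \<in> rel A R" "\<forall>a \<in> set as. (p, a) \<in> fplays g k A" "t = map (cls g k A p) as"
    by (rule rel_GkE)
  have "map counit t = as" using pa(2,3) by (simp add: counit_cls map_idI)
  then show "map counit t \<in> rel A R" using pa(1) by simp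
qed

lemma wf_Gk: "wf_struct ar A \<Longrightarrow> wf_struct ar (Gk g k A)"
  unfolding wf_struct_def
proof (intro allI impI)
  fix R t assume wf: "\<forall>R t. t \<in> rel A R \<longrightarrow> length t = ar R \<and> set t \<subseteq> univ A"
    and t: "t \<in> rel (Gk g k A) R"
  obtain p as where pa: "as \<in> rel A R" "\<forall>a \<in> set as. (p, a) \<in> fplays g k A" "t = map (cls g k A p) as"
    using t by (rule rel_GkE)
  show "length t = ar R \<and> set t \<subseteq> univ (Gk g k A)"
    using wf pa by (auto intro!: cls_in_univ)
qed

lemma Vl_counit:
  assumes pa: "(p,a) \<in> fplays g k A"
  shows "Vl g k A counit p = p"
proof (rule nth_equalityI)
  show "length (Vl g k A counit p) = length p" by simp
  fix i assume "i < length (Vl g k A counit p)"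
  then have i: "i < length p" by simp
  have "(take (Suc i) p, b) \<in> fplays g k A" if "b \<in> p ! i" for b
  proof -
    have ne: "take (Suc i) p \<noteq> []" using i by (cases p) simp_all
    have "last (take (Suc i) p) = p ! i" using i by (simp add: take_Suc_conv_app_nth)
    then show ?thesis using fplays_prefix[OF pa take_is_prefix ne] that by simp
  qed
  then have "(\<lambda>b. counit (cls g k A (take (Suc i) p) b)) ` (p ! i) = p ! i"
    by (simp add: counit_cls)
  then show "Vl g k A counit p ! i = p ! i" using i by (simp add: nth_Vl)
qed

lemma coext_hom:
  assumes hom: "hom (Gk g k A) B f"
  shows "hom (Gk g k A) (Gk g k B) (coext g k A B f)"
  unfolding hom_def
proof (intro conjI allI impI ballI)
  fix X assume "X \<in> univ (Gk g k A)"
  then obtain p a where pa: "(p,a) \<in> fplays g k A" "X = cls g k A p a" by (rule univ_GkE)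
  then show "coext g k A B f X \<in> univ (Gk g k B)"
    using coext_eq[OF hom pa(1)] Vl_fplay[OF hom pa(1)] cls_in_univ by metis
next
  fix R t assume "t \<in> rel (Gk g k A) R"
  then obtain p as where pa: "as \<in> rel A R" "\<forall>a \<in> set as. (p, a) \<in> fplays g k A" "t = map (cls g k A p) as"
    by (rule rel_GkE)
  have e: "map (coext g k A B f) t = map (cls g k B (Vl g k A f p)) (map (\<lambda>a. f (cls g k A p a)) as)"
    using pa(2,3) coext_eq[OF hom] by simp
  have "\<forall>a\<in>set as. fplay g k A (p,a)" using pa(2) unfolding fplays_def by simp
  then have "map (cls g k A p) as \<in> rel (Gk g k A) R" by (rule rel_GkI[OF pa(1)])
  then have "map f (map (cls g k A p) as) \<in> rel B R" using hom unfolding hom_def by blast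
  then have r: "map (\<lambda>a. f (cls g k A p a)) as \<in> rel B R" by (simp add: o_def)
  have "\<forall>c \<in> set (map (\<lambda>a. f (cls g k A p a)) as). fplay g k B (Vl g k A f p, c)"
    using pa(2) Vl_fplay[OF hom] unfolding fplays_def by auto
  then show "map (coext g k A B f) t \<in> rel (Gk g k B) R"
    using rel_GkI[OF r] e by simp
qed

lemma Vl_comp:
  assumes hom: "hom (Gk g k A) B f" and pa: "(p,a) \<in> fplays g k A"
  shows "Vl g k A (h \<circ> coext g k A B f) p = Vl g k B h (Vl g k A f p)"
proof (rule nth_equalityI)
  show "length (Vl g k A (h \<circ> coext g k A B f) p) = length (Vl g k B h (Vl g k A f p))" by simp
  fix i assume "i < length (Vl g k A (h \<circ> coext g k A B f) p)"
  then have i: "i < length p" by simp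
  let ?v = "take (Suc i) p"
  have fb: "(?v, b) \<in> fplays g k A" if "b \<in> p ! i" for b
  proof -
    have ne: "take (Suc i) p \<noteq> []" using i by (cases p) simp_all
    have "last (take (Suc i) p) = p ! i" using i by (simp add: take_Suc_conv_app_nth)
    then show ?thesis using fplays_prefix[OF pa take_is_prefix ne] that by simp
  qed
  have "Vl g k A (h \<circ> coext g k A B f) p ! i = (\<lambda>b. h (coext g k A B f (cls g k A ?v b))) ` (p ! i)"
    using i by (simp add: nth_Vl)
  also have "\<dots> = (\<lambda>b. h (cls g k B (Vl g k A f ?v) (f (cls g k A ?v b)))) ` (p ! i)"
    using coext_eq[OF hom fb] by simp
  also have "\<dots> = Vl g k B h (Vl g k A f p) ! i"
    using i by (simp add: nth_Vl take_Vl image_image)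
  finally show "Vl g k A (h \<circ> coext g k A B f) p ! i = Vl g k B h (Vl g k A f p) ! i" .
qed

lemma coext_assoc:
  assumes f: "hom (Gk g k A) B f" and h: "hom (Gk g k B) C h" and X: "X \<in> univ (Gk g k A)"
  shows "coext g k A C (h \<circ> coext g k A B f) X = coext g k B C h (coext g k A B f X)"
proof -
  obtain p a where pa: "(p,a) \<in> fplays g k A" "X = cls g k A p a" using X by (rule univ_GkE)
  have hf: "hom (Gk g k A) C (h \<circ> coext g k A B f)" using hom_comp coext_hom[OF f] h by blast
  have Y: "coext g k A B f X = cls g k B (Vl g k A f p) (f X)" using coext_eq[OF f pa(1)] pa(2) by simp
  have fpY: "(Vl g k A f p, f X) \<in> fplays g k B" using Vl_fplay[OF f pa(1)] pa(2) by simp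
  have "coext g k A C (h \<circ> coext g k A B f) X
      = cls g k C (Vl g k A (h \<circ> coext g k A B f) p) ((h \<circ> coext g k A B f) X)"
    using coext_eq[OF hf pa(1)] pa(2) by simp
  also have "\<dots> = cls g k C (Vl g k B h (Vl g k A f p)) (h (coext g k A B f X))"
    using Vl_comp[OF f pa(1), of h] by simp
  also have "\<dots> = coext g k B C h (coext g k A B f X)"
    using coext_eq[OF h fpY] Y by simp
  finally show ?thesis .
qed

theorem theorem3p6:
  fixes ar :: "'r \<Rightarrow> nat" and g :: guard_kind and k :: nat
  assumes "k > 0"
  shows
    "(\<forall>A :: ('a, 'r) struct. wf_struct ar A \<longrightarrow>
        wf_struct ar (Gk g k A) \<and> hom (Gk g k A) A counit) \<and>
     (\<forall>A :: ('a, 'r) struct. wf_struct ar A \<longrightarrow>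
        (\<forall>X \<in> univ (Gk g k A). coext g k A A counit X = X)) \<and>
     (\<forall>(A :: ('a, 'r) struct) (B :: ('b, 'r) struct) f.
        wf_struct ar A \<longrightarrow> wf_struct ar B \<longrightarrow> hom (Gk g k A) B f \<longrightarrow>
          hom (Gk g k A) (Gk g k B) (coext g k A B f) \<and>
          (\<forall>X \<in> univ (Gk g k A). counit (coext g k A B f X) = f X)) \<and>
     (\<forall>(A :: ('a, 'r) struct) (B :: ('b, 'r) struct) (C :: ('c, 'r) struct) f h.
        wf_struct ar A \<longrightarrow> wf_struct ar B \<longrightarrow> wf_struct ar C \<longrightarrow>
        hom (Gk g k A) B f \<longrightarrow> hom (Gk g k B) C h \<longrightarrow>
          (\<forall>X \<in> univ (Gk g k A).
             coext g k A C (h \<circ> coext g k A B f) X = coext g k B C h (coext g k A B f X)))"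
proof (intro conjI allI impI ballI)
  fix A :: "('a, 'r) struct"
  assume "wf_struct ar A"
  then show "wf_struct ar (Gk g k A)" by (rule wf_Gk)
  show "hom (Gk g k A) A counit" by (rule hom_counit)
next
  fix A :: "('a, 'r) struct" and X
  assume "X \<in> univ (Gk g k A)"
  then obtain p a where pa: "(p,a) \<in> fplays g k A" "X = cls g k A p a" by (rule univ_GkE)
  show "coext g k A A counit X = X"
    using coext_eq[OF hom_counit pa(1)] Vl_counit[OF pa(1)] counit_cls[OF pa(1)] pa(2) by simp
next
  fix A :: "('a, 'r) struct" and B :: "('b, 'r) struct" and f
  assume f: "hom (Gk g k A) B f"
  then show "hom (Gk g k A) (Gk g k B) (coext g k A B f)" by (rule coext_hom)
  fix X assume "X \<in> univ (Gk g k A)"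
  then obtain p a where pa: "(p,a) \<in> fplays g k A" "X = cls g k A p a" by (rule univ_GkE)
  show "counit (coext g k A B f X) = f X"
    using coext_eq[OF f pa(1)] counit_cls[OF Vl_fplay[OF f pa(1)]] pa(2) by simp
next
  fix A :: "('a, 'r) struct" and B :: "('b, 'r) struct" and C :: "('c, 'r) struct" and f h X
  assume "hom (Gk g k A) B f" "hom (Gk g k B) C h" "X \<in> univ (Gk g k A)"
  then show "coext g k A C (h \<circ> coext g k A B f) X = coext g k B C h (coext g k A B f X)"
    by (rule coext_assoc)
qed


end
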